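(* Let $\frac12\le\alpha\le1$ and let $M\in\mathcal{M}^*_{\mathcal{L}}(\alpha)$ be a Latin array of order $n$. If $M$ is not focused, then there exists a cell $(i,j)$ such that $M_{ij}$ is a clone and $|R_i(M)\cup C_j(M)|\ge(\alpha+1)n-1$.
   Context: An array of order $n$ is an $n\times n$ array with a symbol in each cell; an entry is a triple $(i,j,A_{ij})$. An array is Latin if no symbol appears more than once in any row or column; $\mathcal{L}$ denotes the class of all square Latin arrays. A transversal of an $m\times m$ array is a set of $m$ entries, no two agreeing in row, column, or symbol; an array is transversal-free if it has no transversal. A symbol is a singleton if it occurs exactly once in the array and a clone otherwise; $M_{ij}$ is called a singleton/clone according to the symbol in cell $(i,j)$. $R_i(M)$, $C_j(M)$ are the sets of symbols in row $i$ and column $j$. $A(i\mid j)$ is the array obtained by deleting row $i$ and column $j$, and $\Psi_{ij}(A)$ is the set of symbols appearing in $A$ but not in $A(i\mid j)$. A Latin array $L$ of order $n$ is focused if every singleton of $L$ occurs in a row or a column of $L$ that contains only singletons, and $|\Psi_{ij}(L)|=2n-1$ for some $(i,j)$. For $\frac12\le\alpha\le1$, $\mathcal{M}_{\mathcal{L}}(\alpha)$ is the set of transversal-free arrays in $\mathcal{L}$ whose number of distinct symbols is at least $\alpha$ times the number of cells, and $\mathcal{M}^*_{\mathcal{L}}(\alpha)$ consists of those $A\in\mathcal{M}_{\mathcal{L}}(\alpha)$ such that no array in $\mathcal{M}_{\mathcal{L}}(\alpha)$ has smaller order than $A$, and no array in $\mathcal{M}_{\mathcal{L}}(\alpha)$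 of the same order as $A$ has more distinct symbols than $A$. *)

theory Defs
  imports Main Complex_Main
begin

text \<open>An array of order n is a function A :: nat => nat => nat; only the cells
 (i,j) with i < n and j < n are relevant. Symbols are natural numbers.\<close>

type_synonym array = "nat \<Rightarrow> nat \<Rightarrow> nat"

definition cells :: "nat \<Rightarrow> (nat \<times> nat) set" where
  "cells n = {0..<n} \<times> {0..<n}"

definition symbols :: "nat \<Rightarrow> array \<Rightarrow> nat set" where
  "symbols n A = {A i j | i j. i < n \<and> j < n}"

definition latin :: "nat \<Rightarrow> array \<Rightarrow> bool" where
  "latin n A \<longleftrightarrow>
     (\<forall>i<n. \<forall>j<n. \<forall>j'<n. j \<noteq> j' \<longrightarrow> A i j \<noteq> A i j') \<and>
     (\<forall>j<n. \<forall>i<n. \<forall>i'<n. i \<noteq> i' \<longrightarrow> A i j \<noteq> A i' j)"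

definition is_transversal :: "nat \<Rightarrow> array \<Rightarrow> (nat \<times> nat) set \<Rightarrow> bool" where
  "is_transversal n A T \<longleftrightarrow> T \<subseteq> cells n \<and> card T = n \<and>
     (\<forall>(i,j)\<in>T. \<forall>(k,l)\<in>T. (i,j) \<noteq> (k,l) \<longrightarrow> i \<noteq> k \<and> j \<noteq> l \<and> A i j \<noteq> A k l)"

definition transversal_free :: "nat \<Rightarrow> array \<Rightarrow> bool" where
  "transversal_free n A \<longleftrightarrow> \<not> (\<exists>T. is_transversal n A T)"

definition occurrences :: "nat \<Rightarrow> array \<Rightarrow> nat \<Rightarrow> nat" where
  "occurrences n A s = card {(i,j) \<in> cells n. A i j = s}"

definition is_singleton :: "nat \<Rightarrow> array \<Rightarrow> nat \<Rightarrow> bool" where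
  "is_singleton n A s \<longleftrightarrow> occurrences n A s = 1"

definition is_clone :: "nat \<Rightarrow> array \<Rightarrow> nat \<Rightarrow> bool" where
  "is_clone n A s \<longleftrightarrow> occurrences n A s \<ge> 2"

definition row_syms :: "nat \<Rightarrow> array \<Rightarrow> nat \<Rightarrow> nat set" where
  "row_syms n A i = {A i j | j. j < n}"

definition col_syms :: "nat \<Rightarrow> array \<Rightarrow> nat \<Rightarrow> nat set" where
  "col_syms n A j = {A i j | i. i < n}"

definition Psi :: "nat \<Rightarrow> array \<Rightarrow> nat \<Rightarrow> nat \<Rightarrow> nat set" where
  "Psi n A i j = symbols n A - {A k l | k l. k < n \<and> l < n \<and> k \<noteq> i \<and> l \<noteq> j}"

definition focused :: "nat \<Rightarrow> array \<Rightarrow> bool" where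
  "focused n A \<longleftrightarrow> latin n A \<and>
     (\<forall>i<n. \<forall>j<n. is_singleton n A (A i j) \<longrightarrow>
        (\<forall>l<n. is_singleton n A (A i l)) \<or> (\<forall>k<n. is_singleton n A (A k j))) \<and>
     (\<exists>i<n. \<exists>j<n. card (Psi n A i j) = 2 * n - 1)"

definition in_ML :: "real \<Rightarrow> nat \<Rightarrow> array \<Rightarrow> bool" where
  "in_ML \<alpha> n A \<longleftrightarrow> latin n A \<and> transversal_free n A \<and>
     real (card (symbols n A)) \<ge> \<alpha> * real (n * n)"

definition in_MLstar :: "real \<Rightarrow> nat \<Rightarrow> array \<Rightarrow> bool" where
  "in_MLstar \<alpha> n A \<longleftrightarrow> in_ML \<alpha> n A \<and>
     (\<forall>m B. in_ML \<alpha> m B \<longrightarrow> n \<le> m) \<and>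
     (\<forall>B. in_ML \<alpha> n B \<longrightarrow> card (symbols n B) \<le> card (symbols n A))"

end

theory Submission
  imports Defs
begin


lemma symbols_img: "symbols n A = (\<lambda>(i,j). A i j) ` ({0..<n}\<times>{0..<n})"
  unfolding symbols_def by fastforce

lemma fin_symbols[simp]: "finite (symbols n A)"
  unfolding symbols_img by simp

lemma row_img: "row_syms n A i = (\<lambda>j. A i j) ` {0..<n}"
  unfolding row_syms_def by auto
lemma col_img: "col_syms n A j = (\<lambda>i. A i j) ` {0..<n}"
  unfolding col_syms_def by auto

lemma fin_row[simp]: "finite (row_syms n A i)" unfolding row_img by simp
lemma fin_col[simp]: "finite (col_syms n A i)" unfolding col_img by simp

lemma card_row: assumes "latin n A" "i<n" shows "card (row_syms n A i) = n"
proof -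
  have "inj_on (\<lambda>j. A i j) {0..<n}" using assms unfolding latin_def inj_on_def by (metis atLeastLessThan_iff)
  thus ?thesis unfolding row_img by (simp add: card_image)
qed

lemma card_col: assumes "latin n A" "j<n" shows "card (col_syms n A j) = n"
proof -
  have "inj_on (\<lambda>i. A i j) {0..<n}" using assms unfolding latin_def inj_on_def by (metis atLeastLessThan_iff)
  thus ?thesis unfolding col_img by (simp add: card_image)
qed

lemma fin_occ_set[simp]: "finite {(i,j) \<in> cells n. A i j = s}"
  unfolding cells_def by (rule finite_subset[of _ "{0..<n}\<times>{0..<n}"]) auto

lemma occ_pos: assumes "i<n" "j<n" shows "occurrences n A (A i j) \<ge> 1"
proof -
  have "(i,j) \<in> {(a,b) \<in> cells n. A a b = A i j}" using assms unfolding cells_def by auto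
  hence "{(a,b) \<in> cells n. A a b = A i j} \<noteq> {}" by blast
  thus ?thesis unfolding occurrences_def using fin_occ_set[of n A "A i j"]
    by (simp add: Suc_leI card_gt_0_iff)
qed

lemma singleton_unique:
  assumes "is_singleton n A (A i j)" "i<n" "j<n" "a<n" "b<n" "A a b = A i j"
  shows "a = i \<and> b = j"
proof -
  have c: "card {(x,y) \<in> cells n. A x y = A i j} = 1" using assms(1)
    unfolding is_singleton_def occurrences_def by simp
  then obtain z where z: "{(x,y) \<in> cells n. A x y = A i j} = {z}" by (rule card_1_singletonE)
  have "(i,j) \<in> {(x,y) \<in> cells n. A x y = A i j}" using assms unfolding cells_def by auto
  moreover have "(a,b) \<in> {(x,y) \<in> cells n. A x y = A i j}" using assms unfolding cells_def by auto
  ultimately show ?thesis using z by auto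
qed

lemma nonsingleton_clone:
  assumes "i<n" "j<n" "\<not> is_singleton n A (A i j)" shows "is_clone n A (A i j)"
  using occ_pos[OF assms(1,2), of A] assms(3) unfolding is_singleton_def is_clone_def by auto

lemma n_pos: assumes "transversal_free n A" shows "n \<ge> 1"
proof (rule ccontr)
  assume "\<not> n \<ge> 1" hence "n = 0" by simp
  hence "is_transversal n A {}" unfolding is_transversal_def cells_def by auto
  thus False using assms unfolding transversal_free_def by blast
qed



definition del :: "nat \<Rightarrow> nat \<Rightarrow> nat" where "del a k = (if k < a then k else Suc k)"

lemma del_lt: "k < n - 1 \<Longrightarrow> a < n \<Longrightarrow> del a k < n" unfolding del_def by auto
lemma del_ne: "del a k \<noteq> a" unfolding del_def by auto
lemma del_inj: "del a k = del a k' \<longleftrightarrow> k = k'" unfolding del_def by auto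
lemma del_surj: "m < n \<Longrightarrow> m \<noteq> a \<Longrightarrow> a < n \<Longrightarrow> \<exists>k<n-1. del a k = m"
  unfolding del_def
  by (rule exI[of _ "if m < a then m else m - 1"]) auto

definition restS :: "nat \<Rightarrow> array \<Rightarrow> nat \<Rightarrow> nat \<Rightarrow> nat set" where
  "restS n A i j = {A k l | k l. k < n \<and> l < n \<and> k \<noteq> i \<and> l \<noteq> j}"

lemma Psi_eq: "Psi n A i j = symbols n A - restS n A i j"
  unfolding Psi_def restS_def by simp

lemma rest_sub: "restS n A i j \<subseteq> symbols n A"
  unfolding restS_def symbols_def by blast

lemma del_array_symbols:
  assumes "i < n" "l < n"
  shows "symbols (n-1) (\<lambda>p q. M (del i p) (del l q)) = restS n M i l"
proof
  show "symbols (n-1) (\<lambda>p q. M (del i p) (del l q)) \<subseteq> restS n M i l"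
    unfolding symbols_def restS_def using assms del_lt del_ne by blast
next
  show "restS n M i l \<subseteq> symbols (n-1) (\<lambda>p q. M (del i p) (del l q))"
  proof
    fix x assume "x \<in> restS n M i l"
    then obtain k m where km: "x = M k m" "k<n" "m<n" "k\<noteq>i" "m\<noteq>l" unfolding restS_def by blast
    obtain p where p: "p < n-1" "del i p = k" using del_surj km assms by blast
    obtain q where q: "q < n-1" "del l q = m" using del_surj km assms by blast
    show "x \<in> symbols (n-1) (\<lambda>p q. M (del i p) (del l q))"
      unfolding symbols_def using p q km by blast
  qed
qed

lemma del_array_latin:
  assumes "latin n M" "i < n" "l < n"
  shows "latin (n-1) (\<lambda>p q. M (del i p) (del l q))"
  using assms unfolding latin_def by (metis del_inj del_lt)

lemma del_array_tf:
  assumes "latin n M" "transversal_free n M" "i < n" "l < n" "is_singleton n M (M i l)"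
  shows "transversal_free (n-1) (\<lambda>p q. M (del i p) (del l q))"
proof -
  let ?B = "\<lambda>p q. M (del i p) (del l q)"
  let ?f = "\<lambda>(p,q). (del i p, del l q)"
  { fix T assume T: "is_transversal (n-1) ?B T"
    let ?T = "insert (i,l) (?f ` T)"
    have Tc: "T \<subseteq> cells (n-1)" and Tn: "card T = n-1"
      and Tp: "\<forall>(a,b)\<in>T. \<forall>(c,d)\<in>T. (a,b) \<noteq> (c,d) \<longrightarrow> a \<noteq> c \<and> b \<noteq> d \<and> ?B a b \<noteq> ?B c d"
      using T unfolding is_transversal_def by auto
    have finT: "finite T" using Tc unfolding cells_def by (meson finite_SigmaI finite_atLeastLessThan finite_subset)
    have inj: "inj_on ?f T" unfolding inj_on_def using del_inj by auto
    have nin: "(i,l) \<notin> ?f ` T" using del_ne by (auto, metis)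
    have "card ?T = Suc (n-1)" using nin inj finT Tn by (simp add: card_image)
    also have "\<dots> = n" using assms(3) by simp
    finally have c1: "card ?T = n" .
    have c2: "?T \<subseteq> cells n" using Tc assms(3,4) del_lt unfolding cells_def by auto
    have c3': "a \<noteq> c \<and> b \<noteq> d \<and> M a b \<noteq> M c d"
      if ab: "(a,b) \<in> ?T" and cd: "(c,d) \<in> ?T" and ne: "(a,b) \<noteq> (c,d)" for a b c d
    proof -
      have sing: "\<And>p q. (p,q) \<in> T \<Longrightarrow> M (del i p) (del l q) \<noteq> M i l"
      proof
        fix p q assume pq: "(p,q) \<in> T" "M (del i p) (del l q) = M i l"
        have "p < n-1" "q < n-1" using pq Tc unfolding cells_def by auto
        hence "del i p < n" "del l q < n" using del_lt assms(3,4) by auto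
        hence "del i p = i" using singleton_unique[OF assms(5,3,4)] pq(2) by blast
        thus False using del_ne by metis
      qed
      show "a \<noteq> c \<and> b \<noteq> d \<and> M a b \<noteq> M c d"
      proof (cases "(a,b) = (i,l)")
        case True
        then obtain p q where pq: "(p,q) \<in> T" "(c,d) = (del i p, del l q)" using cd ne by auto
        have "a = i" "b = l" "c = del i p" "d = del l q" using True pq by auto
        thus ?thesis using sing[OF pq(1)] del_ne by metis
      next
        case False
        then obtain p q where pq: "(p,q) \<in> T" "(a,b) = (del i p, del l q)" using ab by auto
        show ?thesis
        proof (cases "(c,d) = (i,l)")
          case True
          have "c = i" "d = l" "a = del i p" "b = del l q" using True pq by auto
          thus ?thesis using sing[OF pq(1)] del_ne by metis
        next
          case False
          then obtain p' q' where pq': "(p',q') \<in> T" "(c,d) = (del i p', del l q')" using cd by auto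
          have "(p,q) \<noteq> (p',q')" using pq pq' ne by auto
          hence "p \<noteq> p' \<and> q \<noteq> q' \<and> ?B p q \<noteq> ?B p' q'" using Tp pq(1) pq'(1) by fast
          thus ?thesis using pq pq' del_inj by auto
        qed
      qed
    qed
    have c3: "\<forall>(a,b)\<in>?T. \<forall>(c,d)\<in>?T. (a,b) \<noteq> (c,d) \<longrightarrow> a \<noteq> c \<and> b \<noteq> d \<and> M a b \<noteq> M c d"
      using c3' by blast
    have "is_transversal n M ?T" unfolding is_transversal_def using c1 c2 c3 by blast
    hence False using assms(2) unfolding transversal_free_def by blast
  }
  thus ?thesis unfolding transversal_free_def by blast
qed

lemma D2:
  assumes "in_MLstar \<alpha> n M" "i<n" "l<n" "is_singleton n M (M i l)"
  shows "real (card (symbols n M)) - real (card (Psi n M i l)) < \<alpha> * real ((n-1)*(n-1))"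
proof (rule ccontr)
  assume H: "\<not> ?thesis"
  have hML: "latin n M" "transversal_free n M" and hmin: "\<forall>m B. in_ML \<alpha> m B \<longrightarrow> n \<le> m"
    using assms(1) unfolding in_MLstar_def in_ML_def by auto
  let ?B = "\<lambda>p q. M (del i p) (del l q)"
  have cardP: "card (Psi n M i l) = card (symbols n M) - card (restS n M i l)"
    unfolding Psi_eq by (simp add: card_Diff_subset rest_sub finite_subset[OF rest_sub])
  have le: "card (restS n M i l) \<le> card (symbols n M)" by (simp add: card_mono rest_sub)
  have "real (card (symbols (n-1) ?B)) = real (card (restS n M i l))"
    using del_array_symbols[OF assms(2,3)] by simp
  also have "\<dots> = real (card (symbols n M)) - real (card (Psi n M i l))" using cardP le by simp
  finally have "real (card (symbols (n-1) ?B)) \<ge> \<alpha> * real ((n-1)*(n-1))" using H by linarith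
  hence "in_ML \<alpha> (n-1) ?B" unfolding in_ML_def
    using del_array_latin[OF hML(1) assms(2,3)] del_array_tf[OF hML assms(2,3,4)] by blast
  hence "n \<le> n-1" using hmin by blast
  thus False using assms(2) by simp
qed



lemma Psi_sub: "Psi n A i l \<subseteq> row_syms n A i \<union> col_syms n A l"
  unfolding Psi_def symbols_def row_syms_def col_syms_def by blast

lemma sing_in_Psi: assumes "i<n" "l<n" "is_singleton n A (A i l)" shows "A i l \<in> Psi n A i l"
proof -
  have "A i l \<in> symbols n A" using assms unfolding symbols_def by blast
  moreover have "A i l \<notin> restS n A i l"
    using singleton_unique[OF assms(3,1,2)] unfolding restS_def by fastforce
  ultimately show ?thesis unfolding Psi_eq by blast
qed

lemma union_card_bound:
  assumes "latin n A" "i<n" "j<n" "X \<subseteq> row_syms n A i" "row_syms n A i \<inter> col_syms n A j \<subseteq> (row_syms n A i - X) \<union> {A i j}"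
  shows "real (card (row_syms n A i \<union> col_syms n A j)) \<ge> real n + real (card X) - 1"
proof -
  let ?R = "row_syms n A i" and ?C = "col_syms n A j"
  have fX: "finite X" using finite_subset[OF assms(4)] by simp
  have "card (?R \<inter> ?C) \<le> card ((?R - X) \<union> {A i j})" using assms(5) by (intro card_mono) auto
  also have "\<dots> \<le> card (?R - X) + 1" using card_Un_le[of "?R - X" "{A i j}"] by simp
  also have "card (?R - X) = n - card X" using card_Diff_subset[OF fX assms(4)] card_row[OF assms(1,2)] by simp
  finally have h: "card (?R \<inter> ?C) \<le> n - card X + 1" .
  have cX: "card X \<le> n" using card_mono[OF _ assms(4)] card_row[OF assms(1,2)] by simp
  have "card (?R \<union> ?C) + card (?R \<inter> ?C) = card ?R + card ?C" using card_Un_Int[of ?R ?C] by simp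
  hence "card (?R \<union> ?C) + card (?R \<inter> ?C) = 2*n" using card_row[OF assms(1,2)] card_col[OF assms(1,3)] by simp
  thus ?thesis using h cX by linarith
qed

lemma union_card_bound_col:
  assumes "latin n A" "k<n" "l<n" "X \<subseteq> col_syms n A l" "row_syms n A k \<inter> col_syms n A l \<subseteq> (col_syms n A l - X) \<union> {A k l}"
  shows "real (card (row_syms n A k \<union> col_syms n A l)) \<ge> real n + real (card X) - 1"
proof -
  let ?R = "row_syms n A k" and ?C = "col_syms n A l"
  have fX: "finite X" using finite_subset[OF assms(4)] by simp
  have "card (?R \<inter> ?C) \<le> card ((?C - X) \<union> {A k l})" using assms(5) by (intro card_mono) auto
  also have "\<dots> \<le> card (?C - X) + 1" using card_Un_le[of "?C - X" "{A k l}"] by simp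
  also have "card (?C - X) = n - card X" using card_Diff_subset[OF fX assms(4)] card_col[OF assms(1,3)] by simp
  finally have h: "card (?R \<inter> ?C) \<le> n - card X + 1" .
  have cX: "card X \<le> n" using card_mono[OF _ assms(4)] card_col[OF assms(1,3)] by simp
  have "card (?R \<union> ?C) + card (?R \<inter> ?C) = card ?R + card ?C" using card_Un_Int[of ?R ?C] by simp
  hence "card (?R \<union> ?C) + card (?R \<inter> ?C) = 2*n" using card_row[OF assms(1,2)] card_col[OF assms(1,3)] by simp
  thus ?thesis using h cX by linarith
qed

lemma caseA:
  assumes ms: "in_MLstar \<alpha> n M" and a1: "\<alpha> \<le> 1"
    and i: "i<n" and l: "l<n" and sg: "is_singleton n M (M i l)"
    and j: "j<n" and nj: "\<not> is_singleton n M (M i j)"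
    and k: "k<n" and nk: "\<not> is_singleton n M (M k l)"
  shows "\<exists>a<n. \<exists>b<n. is_clone n M (M a b) \<and>
           real (card (row_syms n M a \<union> col_syms n M b)) \<ge> (\<alpha> + 1) * real n - 1"
proof -
  have lat: "latin n M" and Nb: "real (card (symbols n M)) \<ge> \<alpha> * real (n*n)"
    using ms unfolding in_MLstar_def in_ML_def by auto
  have d2: "real (card (symbols n M)) - real (card (Psi n M i l)) < \<alpha> * real ((n-1)*(n-1))"
    using D2[OF ms i l sg] .
  have n1: "n \<ge> 1" using i by simp
  have e: "real ((n-1)*(n-1)) = (real n - 1) * (real n - 1)" using n1 by (simp add: of_nat_diff)
  have e2: "real (n*n) = real n * real n" by simp
  have "\<alpha> * (real n * real n) - \<alpha> * ((real n - 1) * (real n - 1)) = \<alpha> * (2 * real n - 1)"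
    by (simp add: algebra_simps)
  moreover have "real (card (symbols n M)) - real (card (Psi n M i l)) < \<alpha> * ((real n - 1) * (real n - 1))"
    using d2 e by simp
  moreover have "real (card (symbols n M)) \<ge> \<alpha> * (real n * real n)" using Nb e2 by simp
  ultimately have P: "real (card (Psi n M i l)) > \<alpha> * (2 * real n - 1)" by linarith
  define A where "A = Psi n M i l \<inter> row_syms n M i"
  define B where "B = Psi n M i l \<inter> col_syms n M l"
  have AB: "A \<union> B = Psi n M i l" using Psi_sub unfolding A_def B_def by blast
  have mil: "M i l \<in> A \<inter> B" using sing_in_Psi[OF i l sg] i l unfolding A_def B_def row_syms_def col_syms_def by blast
  have fP: "finite (Psi n M i l)" unfolding Psi_def by simp
  have "card (A \<union> B) + card (A \<inter> B) = card A + card B"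
    using card_Un_Int[of A B] fP by (simp add: A_def B_def)
  moreover have "card (A \<inter> B) \<ge> 1" using mil fP by (metis A_def Int_assoc One_nat_def Suc_leI card_gt_0_iff empty_iff finite_Int)
  ultimately have "card A + card B \<ge> card (Psi n M i l) + 1" unfolding AB by linarith
  hence "real (card A) + real (card B) \<ge> real (card (Psi n M i l)) + 1" by linarith
  moreover have "\<alpha> * (2 * real n - 1) = 2 * (\<alpha> * real n) - \<alpha>" by (simp add: algebra_simps)
  ultimately have sum: "real (card A) + real (card B) > 2 * (\<alpha> * real n)" using P a1 by linarith
  have jl: "j \<noteq> l" using nj sg by auto
  have ki: "k \<noteq> i" using nk sg by auto
  show ?thesis
  proof (cases "real (card A) \<ge> \<alpha> * real n")
    case True
    have incl: "row_syms n M i \<inter> col_syms n M j \<subseteq> (row_syms n M i - A) \<union> {M i j}"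
    proof
      fix x assume x: "x \<in> row_syms n M i \<inter> col_syms n M j"
      show "x \<in> (row_syms n M i - A) \<union> {M i j}"
      proof (cases "x \<in> A")
        case True
        obtain p where p: "p<n" "x = M p j" using x unfolding col_syms_def by blast
        have "x \<notin> restS n M i l" using True unfolding A_def Psi_eq by blast
        hence "p = i" using p j jl unfolding restS_def by blast
        thus ?thesis using p by simp
      qed (use x in auto)
    qed
    have "real (card (row_syms n M i \<union> col_syms n M j)) \<ge> real n + real (card A) - 1"
      by (rule union_card_bound[OF lat i j _ incl]) (auto simp: A_def)
    hence "real (card (row_syms n M i \<union> col_syms n M j)) \<ge> (\<alpha> + 1) * real n - 1"
      using True by (simp add: algebra_simps)
    thus ?thesis using i j nonsingleton_clone[OF i j nj] by blast
  next
    case False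
    hence Bb: "real (card B) \<ge> \<alpha> * real n" using sum by linarith
    have incl: "row_syms n M k \<inter> col_syms n M l \<subseteq> (col_syms n M l - B) \<union> {M k l}"
    proof
      fix x assume x: "x \<in> row_syms n M k \<inter> col_syms n M l"
      show "x \<in> (col_syms n M l - B) \<union> {M k l}"
      proof (cases "x \<in> B")
        case True
        obtain p where p: "p<n" "x = M k p" using x unfolding row_syms_def by blast
        have "x \<notin> restS n M i l" using True unfolding B_def Psi_eq by blast
        hence "p = l" using p k ki unfolding restS_def by blast
        thus ?thesis using p by simp
      qed (use x in auto)
    qed
    have "real (card (row_syms n M k \<union> col_syms n M l)) \<ge> real n + real (card B) - 1"
      by (rule union_card_bound_col[OF lat k l _ incl]) (auto simp: B_def)
    hence "real (card (row_syms n M k \<union> col_syms n M l)) \<ge> (\<alpha> + 1) * real n - 1"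
      using Bb by (simp add: algebra_simps)
    thus ?thesis using k l nonsingleton_clone[OF k l nk] by blast
  qed
qed



lemma occ_cols: assumes "latin n A"
  shows "occurrences n A s = card {j. j<n \<and> s \<in> col_syms n A j}"
proof -
  have "inj_on snd {(i,j) \<in> cells n. A i j = s}"
  proof (rule inj_onI)
    fix x y assume x: "x \<in> {(i,j) \<in> cells n. A i j = s}" and y: "y \<in> {(i,j) \<in> cells n. A i j = s}" and e: "snd x = snd y"
    obtain a b c d where xy: "x = (a,b)" "y = (c,d)" by fastforce
    have "a<n" "b<n" "c<n" "A a b = s" "A c b = s" using x y e xy unfolding cells_def by auto
    hence "a = c" using assms unfolding latin_def by metis
    thus "x = y" using xy e by simp
  qed
  moreover have "snd ` {(i,j) \<in> cells n. A i j = s} = {j. j<n \<and> s \<in> col_syms n A j}"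
  proof
    show "snd ` {(i,j) \<in> cells n. A i j = s} \<subseteq> {j. j<n \<and> s \<in> col_syms n A j}"
      unfolding cells_def col_syms_def by auto
    show "{j. j<n \<and> s \<in> col_syms n A j} \<subseteq> snd ` {(i,j) \<in> cells n. A i j = s}"
    proof
      fix j assume "j \<in> {j. j<n \<and> s \<in> col_syms n A j}"
      then obtain i where "i<n" "j<n" "s = A i j" unfolding col_syms_def by auto
      hence "(i,j) \<in> {(i,j) \<in> cells n. A i j = s}" unfolding cells_def by auto
      thus "j \<in> snd ` {(i,j) \<in> cells n. A i j = s}" by force
    qed
  qed
  ultimately show ?thesis unfolding occurrences_def using card_image by fastforce
qed

lemma occ_rows: assumes "latin n A"
  shows "occurrences n A s = card {i. i<n \<and> s \<in> row_syms n A i}"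
proof -
  have "inj_on fst {(i,j) \<in> cells n. A i j = s}"
  proof (rule inj_onI)
    fix x y assume x: "x \<in> {(i,j) \<in> cells n. A i j = s}" and y: "y \<in> {(i,j) \<in> cells n. A i j = s}" and e: "fst x = fst y"
    obtain a b c d where xy: "x = (a,b)" "y = (c,d)" by fastforce
    have "a<n" "b<n" "d<n" "A a b = s" "A a d = s" using x y e xy unfolding cells_def by auto
    hence "b = d" using assms unfolding latin_def by metis
    thus "x = y" using xy e by simp
  qed
  moreover have "fst ` {(i,j) \<in> cells n. A i j = s} = {i. i<n \<and> s \<in> row_syms n A i}"
  proof
    show "fst ` {(i,j) \<in> cells n. A i j = s} \<subseteq> {i. i<n \<and> s \<in> row_syms n A i}"
      unfolding cells_def row_syms_def by auto
    show "{i. i<n \<and> s \<in> row_syms n A i} \<subseteq> fst ` {(i,j) \<in> cells n. A i j = s}"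
    proof
      fix i assume "i \<in> {i. i<n \<and> s \<in> row_syms n A i}"
      then obtain j where "i<n" "j<n" "s = A i j" unfolding row_syms_def by auto
      hence "(i,j) \<in> {(i,j) \<in> cells n. A i j = s}" unfolding cells_def by auto
      thus "i \<in> fst ` {(i,j) \<in> cells n. A i j = s}" by force
    qed
  qed
  ultimately show ?thesis unfolding occurrences_def using card_image by fastforce
qed

lemma row_sum: assumes "latin n A" "k<n"
  shows "(\<Sum>j<n. card (row_syms n A k \<inter> col_syms n A j)) = (\<Sum>l<n. occurrences n A (A k l))"
proof -
  have inj: "inj_on (\<lambda>l. A k l) {..<n}" using assms unfolding latin_def inj_on_def by (metis lessThan_iff)
  have R: "row_syms n A k = (\<lambda>l. A k l) ` {..<n}" unfolding row_syms_def by auto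
  have "(\<Sum>j<n. card (row_syms n A k \<inter> col_syms n A j)) = (\<Sum>j<n. \<Sum>s\<in>row_syms n A k. if s \<in> col_syms n A j then 1 else 0)"
  proof (intro sum.cong refl)
    fix j
    have "(\<Sum>s\<in>row_syms n A k. if s \<in> col_syms n A j then 1 else 0) = (\<Sum>s\<in>{s \<in> row_syms n A k. s \<in> col_syms n A j}. 1::nat)"
      using sum.inter_filter[of "row_syms n A k" "\<lambda>_. 1::nat" "\<lambda>s. s \<in> col_syms n A j"] by simp
    also have "{s \<in> row_syms n A k. s \<in> col_syms n A j} = row_syms n A k \<inter> col_syms n A j" by blast
    finally show "card (row_syms n A k \<inter> col_syms n A j) = (\<Sum>s\<in>row_syms n A k. if s \<in> col_syms n A j then 1 else 0)" by simp
  qed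
  also have "\<dots> = (\<Sum>s\<in>row_syms n A k. \<Sum>j<n. if s \<in> col_syms n A j then 1 else 0)"
    by (rule sum.swap)
  also have "\<dots> = (\<Sum>s\<in>row_syms n A k. card {j. j<n \<and> s \<in> col_syms n A j})"
  proof (intro sum.cong refl)
    fix s
    have "(\<Sum>j<n. if s \<in> col_syms n A j then 1 else 0) = (\<Sum>j\<in>{j \<in> {..<n}. s \<in> col_syms n A j}. 1::nat)"
      using sum.inter_filter[of "{..<n}" "\<lambda>_. 1::nat" "\<lambda>j. s \<in> col_syms n A j"] by simp
    also have "{j \<in> {..<n}. s \<in> col_syms n A j} = {j. j<n \<and> s \<in> col_syms n A j}" by auto
    finally show "(\<Sum>j<n. if s \<in> col_syms n A j then 1 else 0) = card {j. j<n \<and> s \<in> col_syms n A j}" by simp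
  qed
  also have "\<dots> = (\<Sum>s\<in>row_syms n A k. occurrences n A s)"
    using occ_cols[OF assms(1)] by simp
  also have "\<dots> = (\<Sum>l<n. occurrences n A (A k l))"
    unfolding R by (simp add: sum.reindex[OF inj])
  finally show ?thesis .
qed

lemma exists_le_avg:
  fixes f :: "'a \<Rightarrow> real"
  assumes "finite S" "S \<noteq> {}" "sum f S \<le> real (card S) * c"
  shows "\<exists>x\<in>S. f x \<le> c"
proof (rule ccontr)
  assume "\<not> ?thesis" hence "\<forall>x\<in>S. c < f x" by auto
  hence "sum (\<lambda>_. c) S < sum f S" using assms(1,2) by (intro sum_strict_mono) auto
  thus False using assms(3) by simp
qed



lemma union_card_eq: assumes "latin n A" "i<n" "j<n"
  shows "card (row_syms n A i \<union> col_syms n A j) + card (row_syms n A i \<inter> col_syms n A j) = 2*n"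
  using card_Un_Int[of "row_syms n A i" "col_syms n A j"] card_row[OF assms(1,2)] card_col[OF assms(1,3)] by simp

lemma caseB:
  assumes lat: "latin n A" and Nb: "real (card (symbols n A)) \<ge> \<alpha> * real (n*n)"
    and hs: "\<forall>i<n. \<forall>j<n. is_singleton n A (A i j) \<longrightarrow> (\<forall>l<n. is_singleton n A (A i l))"
    and k0: "k0 < n" and nk0: "\<not>(\<forall>l<n. is_singleton n A (A k0 l))"
  shows "\<exists>i<n. \<exists>j<n. is_clone n A (A i j) \<and>
           real (card (row_syms n A i \<union> col_syms n A j)) \<ge> (\<alpha> + 1) * real n - 1"
proof -
  define I where "I = {i. i<n \<and> (\<forall>l<n. is_singleton n A (A i l))}"
  define Rw where "Rw = {..<n} - I"
  define r where "r = card I"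
  have Isub: "I \<subseteq> {..<n}" unfolding I_def by auto
  have finI: "finite I" using finite_subset[OF Isub] by simp
  have rn: "r \<le> n" unfolding r_def using card_mono[OF _ Isub] by simp
  have cRw: "card Rw = n - r" unfolding Rw_def r_def using card_Diff_subset[OF finI Isub] by simp
  have finRw: "finite Rw" unfolding Rw_def by simp
  have k0Rw: "k0 \<in> Rw" using k0 nk0 unfolding Rw_def I_def by auto
  have noS: "\<not> is_singleton n A (A k j)" if "k \<in> Rw" "j<n" for k j
  proof
    assume S: "is_singleton n A (A k j)"
    have kn: "k<n" "k \<notin> I" using that unfolding Rw_def by auto
    have "\<forall>l<n. is_singleton n A (A k l)" using hs S kn(1) that(2) by blast
    thus False using kn unfolding I_def by blast
  qed
  have rowsRw: "{i. i<n \<and> A k j \<in> row_syms n A i} \<subseteq> Rw" if "k \<in> Rw" "j<n" for k j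
  proof
    fix i assume "i \<in> {i. i<n \<and> A k j \<in> row_syms n A i}"
    then obtain b where b: "i<n" "b<n" "A i b = A k j" unfolding row_syms_def by auto
    show "i \<in> Rw"
    proof (rule ccontr)
      assume "i \<notin> Rw" hence "i \<in> I" using b unfolding Rw_def by auto
      hence "is_singleton n A (A i b)" using b unfolding I_def by auto
      thus False using noS[OF that] b by simp
    qed
  qed
  have occle: "occurrences n A (A k j) \<le> n - r" if "k \<in> Rw" "j<n" for k j
    using occ_rows[OF lat] card_mono[OF finRw rowsRw[OF that]] cRw by simp
  have occge: "occurrences n A (A k j) \<ge> 2" if "k \<in> Rw" "j<n" for k j
    using nonsingleton_clone[of k n j A] noS[OF that] that unfolding Rw_def is_clone_def by auto
  show ?thesis
  proof (cases "real r \<ge> \<alpha> * real n - 1")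
    case True
    have n0: "0 < n" using k0 by simp
    define Cs where "Cs = (\<lambda>i. A i 0) ` I"
    have Cs_sub: "Cs \<subseteq> col_syms n A 0" unfolding Cs_def col_syms_def I_def by auto
    have disj: "row_syms n A k0 \<inter> Cs = {}"
    proof (rule ccontr)
      assume "row_syms n A k0 \<inter> Cs \<noteq> {}"
      then obtain l i where li: "l<n" "i \<in> I" "A k0 l = A i 0" unfolding row_syms_def Cs_def by blast
      have "is_singleton n A (A i 0)" using li n0 unfolding I_def by auto
      hence "k0 = i" using singleton_unique[of n A i 0 k0 l] li k0 n0 Isub by auto
      thus False using li k0Rw unfolding Rw_def by auto
    qed
    have injC: "inj_on (\<lambda>i. A i 0) I"
      using lat Isub n0 unfolding latin_def inj_on_def by (metis lessThan_iff subsetD)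
    have cCs: "card Cs = r" unfolding Cs_def r_def using card_image[OF injC] .
    have "card (row_syms n A k0 \<union> Cs) = n + r"
      using card_Un_disjoint[OF fin_row finite_subset[OF Cs_sub fin_col] disj] card_row[OF lat k0] cCs by simp
    moreover have "card (row_syms n A k0 \<union> Cs) \<le> card (row_syms n A k0 \<union> col_syms n A 0)"
      using Cs_sub by (intro card_mono) auto
    ultimately have "real (card (row_syms n A k0 \<union> col_syms n A 0)) \<ge> real n + real r" by simp
    hence "real (card (row_syms n A k0 \<union> col_syms n A 0)) \<ge> (\<alpha> + 1) * real n - 1"
      using True by (simp add: algebra_simps)
    moreover have "is_clone n A (A k0 0)" using occge[OF k0Rw n0] unfolding is_clone_def by simp
    ultimately show ?thesis using k0 n0 by blast
  next
    case False
    define L where "L = Rw \<times> {..<n}"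
    define g where "g = (\<lambda>(i::nat,j::nat). A i j)"
    define oc where "oc = (\<lambda>x. real (occurrences n A (g x)))"
    define K where "K = real n - real r"
    have finL: "finite L" unfolding L_def using finRw by simp
    have cL: "real (card L) = K * real n" unfolding L_def K_def using cRw rn by (simp add: card_cartesian_product of_nat_diff)
    have Lne: "L \<noteq> {}" unfolding L_def using k0Rw k0 by auto
    have oge: "oc x \<ge> 2" and ole: "oc x \<le> K" if xL: "x \<in> L" for x
    proof -
      obtain k j where kj: "x = (k,j)" "k \<in> Rw" "j < n" using xL unfolding L_def by auto
      have "occurrences n A (A k j) \<le> n - r" "occurrences n A (A k j) \<ge> 2"
        using occle[OF kj(2,3)] occge[OF kj(2,3)] by auto
      hence "real (occurrences n A (A k j)) \<le> real (n - r)" "real (occurrences n A (A k j)) \<ge> 2" by linarith+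
      thus "oc x \<ge> 2" "oc x \<le> K" unfolding oc_def g_def K_def using kj rn by (auto simp: of_nat_diff)
    qed
    have S1: "(\<Sum>x\<in>L. oc x) = (\<Sum>x\<in>L. real (card (row_syms n A (fst x) \<inter> col_syms n A (snd x))))"
    proof -
      have "(\<Sum>x\<in>L. oc x) = (\<Sum>k\<in>Rw. \<Sum>l<n. real (occurrences n A (A k l)))"
        unfolding L_def oc_def g_def sum.cartesian_product by (simp add: case_prod_beta)
      also have "\<dots> = (\<Sum>k\<in>Rw. \<Sum>j<n. real (card (row_syms n A k \<inter> col_syms n A j)))"
      proof (rule sum.cong[OF refl])
        fix k assume "k \<in> Rw" hence "k < n" unfolding Rw_def by auto
        thus "(\<Sum>l<n. real (occurrences n A (A k l))) = (\<Sum>j<n. real (card (row_syms n A k \<inter> col_syms n A j)))"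
          using row_sum[OF lat, of k] by (metis of_nat_sum)
      qed
      also have "\<dots> = (\<Sum>x\<in>L. real (card (row_syms n A (fst x) \<inter> col_syms n A (snd x))))"
        unfolding L_def sum.cartesian_product by (simp add: case_prod_beta)
      finally show ?thesis .
    qed
    have S2: "(\<Sum>x\<in>L. 1 / oc x) = real (card (g ` L))"
    proof -
      have "(\<Sum>x\<in>L. 1 / oc x) = (\<Sum>y\<in>g ` L. \<Sum>x\<in>{x. x \<in> L \<and> g x = y}. 1 / oc x)"
        by (rule sum.image_gen[OF finL])
      also have "\<dots> = (\<Sum>y\<in>g ` L. 1)"
      proof (rule sum.cong[OF refl])
        fix y assume "y \<in> g ` L"
        then obtain k j where kj: "k \<in> Rw" "j < n" "y = A k j" unfolding L_def g_def by auto
        have eq: "{x. x \<in> L \<and> g x = y} = {(i,j) \<in> cells n. A i j = y}"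
        proof
          show "{x. x \<in> L \<and> g x = y} \<subseteq> {(i,j) \<in> cells n. A i j = y}"
            unfolding L_def g_def cells_def Rw_def by auto
          show "{(i,j) \<in> cells n. A i j = y} \<subseteq> {x. x \<in> L \<and> g x = y}"
          proof
            fix x assume x: "x \<in> {(i,j) \<in> cells n. A i j = y}"
            obtain a b where ab: "x = (a,b)" by fastforce
            have ab2: "a<n" "b<n" "A a b = y" using x ab unfolding cells_def by auto
            hence "a \<in> {i. i<n \<and> A k j \<in> row_syms n A i}" using kj unfolding row_syms_def by (auto intro!: exI[of _ b])
            hence "a \<in> Rw" using rowsRw[OF kj(1,2)] by blast
            thus "x \<in> {x. x \<in> L \<and> g x = y}" using ab ab2 unfolding L_def g_def by auto
          qed
        qed
        have ox: "\<And>x. x \<in> {x. x \<in> L \<and> g x = y} \<Longrightarrow> oc x = real (occurrences n A y)"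
          unfolding oc_def by auto
        have "(\<Sum>x\<in>{x. x \<in> L \<and> g x = y}. 1 / oc x) = (\<Sum>x\<in>{x. x \<in> L \<and> g x = y}. 1 / real (occurrences n A y))"
          using ox by (intro sum.cong refl) auto
        also have "\<dots> = real (occurrences n A y) * (1 / real (occurrences n A y))"
          unfolding eq occurrences_def by simp
        also have "\<dots> = 1" using occge[OF kj(1,2)] kj(3) by simp
        finally show "(\<Sum>x\<in>{x. x \<in> L \<and> g x = y}. 1 / oc x) = 1" .
      qed
      finally show ?thesis by simp
    qed
    have S3: "card (symbols n A) \<le> card (g ` L) + r * n"
    proof -
      have "symbols n A \<subseteq> g ` L \<union> g ` (I \<times> {..<n})"
      proof
        fix s assume "s \<in> symbols n A"
        then obtain a b where ab: "a<n" "b<n" "s = A a b" unfolding symbols_def by auto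
        show "s \<in> g ` L \<union> g ` (I \<times> {..<n})"
        proof (cases "a \<in> I")
          case True thus ?thesis using ab unfolding g_def by force
        next
          case False hence "a \<in> Rw" using ab unfolding Rw_def by auto
          thus ?thesis using ab unfolding g_def L_def by force
        qed
      qed
      hence "card (symbols n A) \<le> card (g ` L \<union> g ` (I \<times> {..<n}))"
        using finL finI by (intro card_mono) auto
      also have "\<dots> \<le> card (g ` L) + card (g ` (I \<times> {..<n}))" by (rule card_Un_le)
      also have "card (g ` (I \<times> {..<n})) \<le> card (I \<times> {..<n})" by (rule card_image_le) (use finI in simp)
      also have "card (I \<times> {..<n}) = r * n" unfolding r_def by (simp add: card_cartesian_product)
      finally show ?thesis by simp
    qed
    have S4: "oc x \<le> (K + 2) - 2 * K * (1 / oc x)" if "x \<in> L" for x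
    proof -
      have a: "oc x \<ge> 2" "oc x \<le> K" using oge[OF that] ole[OF that] by auto
      have "(oc x - 2) * (oc x - K) \<le> 0" using a by (intro mult_nonneg_nonpos) auto
      hence b: "oc x * oc x \<le> (K + 2) * oc x - 2 * K" by (simp add: algebra_simps)
      have "2 * K * (1 / oc x) = 2 * K / oc x" by simp
      also have "\<dots> \<le> (K + 2) - oc x"
      proof -
        have pos: "oc x > 0" using a by simp
        have "2 * K \<le> ((K + 2) - oc x) * oc x" using b by (simp add: algebra_simps)
        thus ?thesis using pos by (simp add: pos_divide_le_eq)
      qed
      finally show ?thesis by simp
    qed
    have "(\<Sum>x\<in>L. oc x) \<le> (\<Sum>x\<in>L. (K + 2) - 2 * K * (1 / oc x))"
      using S4 by (rule sum_mono)
    also have "\<dots> = (K + 2) * real (card L) - 2 * K * (\<Sum>x\<in>L. 1 / oc x)"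
      by (simp add: sum_subtractf sum_distrib_left)
    also have "\<dots> = (K + 2) * (K * real n) - 2 * K * real (card (g ` L))" using cL S2 by simp
    finally have T1: "(\<Sum>x\<in>L. oc x) \<le> (K + 2) * (K * real n) - 2 * K * real (card (g ` L))" .
    have m: "real (card (g ` L)) \<ge> \<alpha> * (real n * real n) - real r * real n"
    proof -
      have "real (card (symbols n A)) \<le> real (card (g ` L) + r * n)" using S3 by linarith
      hence "real (card (symbols n A)) \<le> real (card (g ` L)) + real r * real n" by simp
      moreover have "\<alpha> * real (n*n) = \<alpha> * (real n * real n)" by simp
      ultimately show ?thesis using Nb by linarith
    qed
    have K0: "K \<ge> 0" unfolding K_def using rn by simp
    have "2 * K * real (card (g ` L)) \<ge> 2 * K * (\<alpha> * (real n * real n) - real r * real n)"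
      using m K0 by (intro mult_left_mono) auto
    have eqK: "(K + 2) * (K * real n) - 2 * K * (\<alpha> * (real n * real n) - real r * real n)
        = K * real n * (real n + real r + 2 - 2 * \<alpha> * real n)"
      unfolding K_def by (simp add: algebra_simps)
    note T2 = T1 eqK
    have "real n + real r + 2 - 2 * \<alpha> * real n \<le> (1 - \<alpha>) * real n + 1"
    proof -
      have "(1 - \<alpha>) * real n = real n - \<alpha> * real n" by (simp add: algebra_simps)
      thus ?thesis using False by linarith
    qed
    hence T3: "K * real n * (real n + real r + 2 - 2 * \<alpha> * real n) \<le> K * real n * ((1 - \<alpha>) * real n + 1)"
      using K0 by (intro mult_left_mono) auto
    have T4: "real (card L) * ((1 - \<alpha>) * real n + 1) = K * real n * ((1 - \<alpha>) * real n + 1)"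
      using cL by simp
    have "(\<Sum>x\<in>L. real (card (row_syms n A (fst x) \<inter> col_syms n A (snd x)))) \<le> real (card L) * ((1 - \<alpha>) * real n + 1)"
      using T1 eqK T3 T4 S1 \<open>2 * K * real (card (g ` L)) \<ge> 2 * K * (\<alpha> * (real n * real n) - real r * real n)\<close>
      by linarith
    then obtain x where x: "x \<in> L" "real (card (row_syms n A (fst x) \<inter> col_syms n A (snd x))) \<le> (1 - \<alpha>) * real n + 1"
      using exists_le_avg[OF finL Lne] by blast
    obtain k j where kj: "x = (k,j)" by fastforce
    have kj2: "k \<in> Rw" "j < n" "k < n" using x kj unfolding L_def Rw_def by auto
    have "real (card (row_syms n A k \<union> col_syms n A j)) \<ge> (\<alpha> + 1) * real n - 1"
    proof -
      have e1: "real (card (row_syms n A k \<union> col_syms n A j)) + real (card (row_syms n A k \<inter> col_syms n A j)) = 2 * real n"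
        using union_card_eq[OF lat kj2(3,2)] by (metis of_nat_add of_nat_mult of_nat_numeral)
      have e2: "real (card (row_syms n A k \<inter> col_syms n A j)) \<le> (1 - \<alpha>) * real n + 1" using x kj by simp
      have e3: "real (card (row_syms n A k \<inter> col_syms n A j)) \<le> real n - \<alpha> * real n + 1"
        using e2 by (simp add: algebra_simps)
      have "(\<alpha> + 1) * real n - 1 = \<alpha> * real n + real n - 1" by (simp add: algebra_simps)
      also have "\<dots> \<le> real (card (row_syms n A k \<union> col_syms n A j))" using e1 e3 by linarith
      finally show ?thesis .
    qed
    moreover have "is_clone n A (A k j)" using occge[OF kj2(1,2)] unfolding is_clone_def by simp
    ultimately show ?thesis using kj2 by blast
  qed
qed



lemma tr_latin: "latin n (\<lambda>i j. M j i) \<longleftrightarrow> latin n M"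
  unfolding latin_def by blast

lemma tr_symbols: "symbols n (\<lambda>i j. M j i) = symbols n M"
  unfolding symbols_def by blast

lemma tr_occ: "occurrences n (\<lambda>i j. M j i) s = occurrences n M s"
proof -
  have "(\<lambda>(i,j). (j,i)) ` {(i,j) \<in> cells n. M j i = s} = {(i,j) \<in> cells n. M i j = s}"
    unfolding cells_def by force
  moreover have "inj_on (\<lambda>(i,j). (j,i)) {(i,j) \<in> cells n. M j i = s}" unfolding inj_on_def by auto
  ultimately show ?thesis unfolding occurrences_def by (metis (no_types, lifting) card_image)
qed

lemma tr_sing: "is_singleton n (\<lambda>i j. M j i) s = is_singleton n M s"
  unfolding is_singleton_def by (subst tr_occ) (rule refl)
lemma tr_clone: "is_clone n (\<lambda>i j. M j i) s = is_clone n M s"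
  unfolding is_clone_def by (subst tr_occ) (rule refl)
lemma tr_row: "row_syms n (\<lambda>i j. M j i) i = col_syms n M i"
  unfolding row_syms_def col_syms_def ..
lemma tr_col: "col_syms n (\<lambda>i j. M j i) j = row_syms n M j"
  unfolding row_syms_def col_syms_def ..

lemma cross_Psi:
  assumes lat: "latin n M" and i: "i<n" and j: "j<n"
    and r: "\<forall>l<n. is_singleton n M (M i l)" and c: "\<forall>k<n. is_singleton n M (M k j)"
  shows "card (Psi n M i j) = 2*n - 1"
proof -
  have eq: "Psi n M i j = row_syms n M i \<union> col_syms n M j"
  proof
    show "Psi n M i j \<subseteq> row_syms n M i \<union> col_syms n M j" by (rule Psi_sub)
    show "row_syms n M i \<union> col_syms n M j \<subseteq> Psi n M i j"
    proof
      fix x assume "x \<in> row_syms n M i \<union> col_syms n M j"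
      then consider a where "a<n" "x = M i a" | b where "b<n" "x = M b j"
        unfolding row_syms_def col_syms_def by blast
      thus "x \<in> Psi n M i j"
      proof cases
        case 1
        have "x \<in> symbols n M" using 1 i unfolding symbols_def by blast
        moreover have "x \<notin> restS n M i j"
        proof
          assume "x \<in> restS n M i j"
          then obtain p q where pq: "p<n" "q<n" "p\<noteq>i" "q\<noteq>j" "x = M p q" unfolding restS_def by blast
          have "p = i" using singleton_unique[of n M i a p q] r 1 i pq by auto
          thus False using pq by simp
        qed
        ultimately show ?thesis unfolding Psi_eq by blast
      next
        case 2
        have "x \<in> symbols n M" using 2 j unfolding symbols_def by blast
        moreover have "x \<notin> restS n M i j"
        proof
          assume "x \<in> restS n M i j"
          then obtain p q where pq: "p<n" "q<n" "p\<noteq>i" "q\<noteq>j" "x = M p q" unfolding restS_def by blast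
          have "q = j" using singleton_unique[of n M b j p q] c 2 j pq by auto
          thus False using pq by simp
        qed
        ultimately show ?thesis unfolding Psi_eq by blast
      qed
    qed
  qed
  have int: "row_syms n M i \<inter> col_syms n M j = {M i j}"
  proof
    show "{M i j} \<subseteq> row_syms n M i \<inter> col_syms n M j" using i j unfolding row_syms_def col_syms_def by blast
    show "row_syms n M i \<inter> col_syms n M j \<subseteq> {M i j}"
    proof
      fix x assume "x \<in> row_syms n M i \<inter> col_syms n M j"
      then obtain a b where ab: "a<n" "b<n" "x = M i a" "x = M b j" unfolding row_syms_def col_syms_def by blast
      have "b = i \<and> j = a" using singleton_unique[of n M i a b j] r ab i j by auto
      thus "x \<in> {M i j}" using ab by simp
    qed
  qed
  show ?thesis using union_card_eq[OF lat i j] int unfolding eq by simp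
qed

theorem mainTheorem11:
  fixes \<alpha> :: real and n :: nat and M :: array
  assumes "1/2 \<le> \<alpha>" and "\<alpha> \<le> 1"
    and "in_MLstar \<alpha> n M"
    and "\<not> focused n M"
  shows "\<exists>i<n. \<exists>j<n. is_clone n M (M i j) \<and>
           real (card (row_syms n M i \<union> col_syms n M j)) \<ge> (\<alpha> + 1) * real n - 1"
proof -
  have lat: "latin n M" and tf: "transversal_free n M" and Nb: "real (card (symbols n M)) \<ge> \<alpha> * real (n*n)"
    using assms(3) unfolding in_MLstar_def in_ML_def by auto
  have n1: "n \<ge> 1" using n_pos[OF tf] .
  have nf: "\<not> ((\<forall>i<n. \<forall>j<n. is_singleton n M (M i j) \<longrightarrow>
        (\<forall>l<n. is_singleton n M (M i l)) \<or> (\<forall>k<n. is_singleton n M (M k j))) \<and>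
     (\<exists>i<n. \<exists>j<n. card (Psi n M i j) = 2 * n - 1))"
    using assms(4) lat unfolding focused_def by blast
  show ?thesis
  proof (cases "\<forall>i<n. \<forall>j<n. is_singleton n M (M i j) \<longrightarrow>
        (\<forall>l<n. is_singleton n M (M i l)) \<or> (\<forall>k<n. is_singleton n M (M k j))")
    case False
    then obtain i j where ij: "i<n" "j<n" "is_singleton n M (M i j)"
      "\<not>(\<forall>l<n. is_singleton n M (M i l))" "\<not>(\<forall>k<n. is_singleton n M (M k j))" by blast
    then obtain l k where lk: "l<n" "\<not> is_singleton n M (M i l)" "k<n" "\<not> is_singleton n M (M k j)" by blast
    show ?thesis using caseA[OF assms(3,2) ij(1,2,3) lk] .
  next
    case P1: True
    hence P2: "\<forall>i<n. \<forall>j<n. card (Psi n M i j) \<noteq> 2 * n - 1" using nf by blast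
    have "\<not> (\<exists>i<n. \<forall>l<n. is_singleton n M (M i l)) \<or> \<not> (\<exists>j<n. \<forall>k<n. is_singleton n M (M k j))"
      using cross_Psi[OF lat] P2 by blast
    thus ?thesis
    proof
      assume nr: "\<not> (\<exists>i<n. \<forall>l<n. is_singleton n M (M i l))"
      let ?Mt = "\<lambda>i j. M j i"
      have latt: "latin n ?Mt" using lat tr_latin[of n M] by simp
      have Nbt: "real (card (symbols n ?Mt)) \<ge> \<alpha> * real (n*n)" using Nb tr_symbols[of n M] by simp
      have hst: "\<forall>i<n. \<forall>j<n. is_singleton n ?Mt (?Mt i j) \<longrightarrow> (\<forall>l<n. is_singleton n ?Mt (?Mt i l))"
        using P1 nr unfolding tr_sing[of n M] by blast
      obtain l where l: "l<n" "\<not> is_singleton n M (M 0 l)" using nr n1 by auto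
      have n0: "0 < n" using n1 by simp
      have "\<not>(\<forall>m<n. is_singleton n ?Mt (?Mt l m))" using l n0 unfolding tr_sing[of n M] by blast
      from caseB[OF latt Nbt hst l(1) this] obtain i j where
        ij: "i<n" "j<n" "is_clone n ?Mt (?Mt i j)"
            "real (card (row_syms n ?Mt i \<union> col_syms n ?Mt j)) \<ge> (\<alpha> + 1) * real n - 1" by blast
      have "is_clone n M (M j i)" using ij(3) unfolding tr_clone[of n M] .
      moreover have "real (card (row_syms n M j \<union> col_syms n M i)) \<ge> (\<alpha> + 1) * real n - 1"
        using ij(4) unfolding tr_row[of n M] tr_col[of n M] by (simp add: Un_commute)
      ultimately show ?thesis using ij(1,2) by blast
    next
      assume nc: "\<not> (\<exists>j<n. \<forall>k<n. is_singleton n M (M k j))"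
      have hs: "\<forall>i<n. \<forall>j<n. is_singleton n M (M i j) \<longrightarrow> (\<forall>l<n. is_singleton n M (M i l))"
        using P1 nc by blast
      obtain k where k: "k<n" "\<not> is_singleton n M (M k 0)" using nc n1 by auto
      have n0: "0 < n" using n1 by simp
      have "\<not>(\<forall>m<n. is_singleton n M (M k m))" using k n0 by blast
      from caseB[OF lat Nb hs k(1) this] show ?thesis .
    qed
  qed
qed


end
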